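(* Let $(X,\pi)$ be a finite symmetric two-player game with relative payoff game $(X,\Delta)$. If $(X,\Delta)$ is a generalized ordinal potential game, then imitation is not subject to a money pump.
   Context: $\pi(x,y)$ is the payoff of the player choosing $x$ against $y$; $\Delta(x,y)=\pi(x,y)-\pi(y,x)$. The symmetric game $(X,\Delta)$ is a generalized ordinal potential game if there is $P:X\times X\to\mathbb{R}$ such that for all $y,x,x'\in X$: $\Delta(x,y)-\Delta(x',y)>0$ implies $P(x,y)-P(x',y)>0$, and $\Delta(x,y)-\Delta(x',y)>0$ implies $P(y,x)-P(y,x')>0$. Imitate-the-best: given initial $y_0\in X$ and any opponent sequence $(x_t)_{t\ge0}$, $y_t=x_{t-1}$ if $\Delta(x_{t-1},y_{t-1})>0$ and $y_t=y_{t-1}$ otherwise. Imitation is not subject to a money pump if there is $M\in\mathbb{R}_+$ such that for every $y_0\in X$ and every sequence $(x_t)$, $\limsup_{T\to\infty}\sum_{t=0}^T\Delta(x_t,y_t)\le M$. *)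

theory Defs
  imports Complex_Main "HOL-Library.Extended_Real"
begin

definition relpay :: "('a \<Rightarrow> 'a \<Rightarrow> real) \<Rightarrow> 'a \<Rightarrow> 'a \<Rightarrow> real" where
  "relpay \<pi> x y = \<pi> x y - \<pi> y x"

definition gen_ord_potential :: "('a \<Rightarrow> 'a \<Rightarrow> real) \<Rightarrow> bool" where
  "gen_ord_potential D \<longleftrightarrow> (\<exists>P :: 'a \<Rightarrow> 'a \<Rightarrow> real. \<forall>y x x'.
      (D x y - D x' y > 0 \<longrightarrow> P x y - P x' y > 0) \<and>
      (D x y - D x' y > 0 \<longrightarrow> P y x - P y x' > 0))"

primrec imitate :: "('a \<Rightarrow> 'a \<Rightarrow> real) \<Rightarrow> 'a \<Rightarrow> (nat \<Rightarrow> 'a) \<Rightarrow> nat \<Rightarrow> 'a" where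
  "imitate D y0 xs 0 = y0"
| "imitate D y0 xs (Suc t) =
     (if D (xs t) (imitate D y0 xs t) > 0 then xs t else imitate D y0 xs t)"

definition no_money_pump :: "('a \<Rightarrow> 'a \<Rightarrow> real) \<Rightarrow> bool" where
  "no_money_pump D \<longleftrightarrow> (\<exists>M::real. M \<ge> 0 \<and> (\<forall>y0 xs.
      limsup (\<lambda>T. ereal (\<Sum>t\<le>T. D (xs t) (imitate D y0 xs t))) \<le> ereal M))"

end

theory Submission
  imports Defs
begin

theorem proposition4:
  fixes \<pi> :: "'a::finite \<Rightarrow> 'a \<Rightarrow> real"
  assumes "gen_ord_potential (relpay \<pi>)"
  shows "no_money_pump (relpay \<pi>)"
proof -
  define D where "D = relpay \<pi>"
  have anti: "D x y = - D y x" for x y by (simp add: D_def relpay_def)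
  have D0: "D x x = 0" for x by (simp add: D_def relpay_def)
  obtain P :: "'a \<Rightarrow> 'a \<Rightarrow> real" where P: "\<And>y x x'.
      (D x y - D x' y > 0 \<longrightarrow> P x y - P x' y > 0) \<and>
      (D x y - D x' y > 0 \<longrightarrow> P y x - P y x' > 0)"
    using assms unfolding gen_ord_potential_def D_def by blast
  define Q where "Q z = P z z" for z
  have Qinc: "Q y < Q x" if "D x y > 0" for x y
  proof -
    have "P x y > P y y" using P[of x y y] that D0[of y] by auto
    moreover have "D x x - D y x > 0" using that anti[of y x] D0[of x] by auto
    then have "P x x > P x y" using P[of x x y] by auto
    ultimately show ?thesis unfolding Q_def by linarith
  qed
  define Dm where "Dm = (\<Sum>p\<in>(UNIV::('a\<times>'a) set). \<bar>D (fst p) (snd p)\<bar>)"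
  have Dm: "D x y \<le> Dm" for x y
  proof -
    have "\<bar>D (fst (x,y)) (snd (x,y))\<bar> \<le> Dm" unfolding Dm_def
      by (rule member_le_sum) auto
    then show ?thesis by simp
  qed
  have Dm0: "Dm \<ge> 0" using Dm[of undefined undefined] D0 by simp
  define M where "M = Dm * real (card (UNIV::'a set))"
  have "\<forall>y0 xs. limsup (\<lambda>T. ereal (\<Sum>t\<le>T. D (xs t) (imitate D y0 xs t))) \<le> ereal M"
  proof (intro allI)
    fix y0 xs
    define y where "y = imitate D y0 xs"
    define f where "f T = real (card {z. Q z \<le> Q (y T)})" for T
    have inv: "(\<Sum>t<T. D (xs t) (y t)) \<le> Dm * (f T - f 0)" for T
    proof (induction T)
      case 0 then show ?case by simp
    next
      case (Suc T)
      show ?case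
      proof (cases "D (xs T) (y T) > 0")
        case True
        then have yS: "y (Suc T) = xs T" by (simp add: y_def)
        have lt: "Q (y T) < Q (y (Suc T))" using Qinc[OF True] yS by simp
        have sub: "{z. Q z \<le> Q (y T)} \<subset> {z. Q z \<le> Q (y (Suc T))}"
        proof
          show "{z. Q z \<le> Q (y T)} \<subseteq> {z. Q z \<le> Q (y (Suc T))}" using lt by auto
          have "y (Suc T) \<in> {z. Q z \<le> Q (y (Suc T))}" by simp
          moreover have "y (Suc T) \<notin> {z. Q z \<le> Q (y T)}" using lt by simp
          ultimately show "{z. Q z \<le> Q (y T)} \<noteq> {z. Q z \<le> Q (y (Suc T))}" by blast
        qed
        have "card {z. Q z \<le> Q (y T)} < card {z. Q z \<le> Q (y (Suc T))}"
          by (rule psubset_card_mono[OF _ sub]) simp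
        then have "f T + 1 \<le> f (Suc T)" unfolding f_def by linarith
        then have "Dm * (f T - f 0) + Dm \<le> Dm * (f (Suc T) - f 0)"
        proof -
          have "Dm * 1 \<le> Dm * (f (Suc T) - f T)" using Dm0 \<open>f T + 1 \<le> f (Suc T)\<close>
            by (intro mult_left_mono) auto
          then show ?thesis by (simp add: algebra_simps)
        qed
        then show ?thesis using Suc Dm[of "xs T" "y T"] by simp
      next
        case False
        then have "y (Suc T) = y T" by (simp add: y_def)
        then show ?thesis using Suc False by (simp add: f_def)
      qed
    qed
    have fb: "f T - f 0 \<le> real (card (UNIV::'a set))" for T
    proof -
      have "card {z. Q z \<le> Q (y T)} \<le> card (UNIV::'a set)" by (rule card_mono) auto
      then show ?thesis unfolding f_def by simp
    qed
    have bnd: "(\<Sum>t\<le>T. D (xs t) (y t)) \<le> M" for T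
    proof -
      have "(\<Sum>t\<le>T. D (xs t) (y t)) = (\<Sum>t<Suc T. D (xs t) (y t))"
        by (simp add: lessThan_Suc_atMost)
      also have "\<dots> \<le> Dm * (f (Suc T) - f 0)" by (rule inv)
      also have "\<dots> \<le> M" unfolding M_def using fb[of "Suc T"] Dm0
        by (simp add: mult_left_mono)
      finally show ?thesis .
    qed
    show "limsup (\<lambda>T. ereal (\<Sum>t\<le>T. D (xs t) (imitate D y0 xs t))) \<le> ereal M"
      by (rule Limsup_bounded) (use bnd in \<open>simp add: y_def\<close>)
  qed
  moreover have "M \<ge> 0" unfolding M_def using Dm0 by simp
  ultimately show ?thesis unfolding no_money_pump_def D_def by blast
qed

end
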